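(* Let $\mathfrak g$ be a real almost abelian Lie algebra (i.e. $\mathfrak g$ has an abelian ideal of codimension one) and let $(J,\langle\cdot,\cdot\rangle)$ be a Hermitian structure on $\mathfrak g$. Then there exist a $J$-invariant abelian ideal $\mathfrak a$ of $\mathfrak g$ of codimension $2$, an orthonormal basis $\{f_1,f_2\}$ of $\mathfrak a^{\perp}$, a vector $v_0\in\mathfrak a$ and a number $\mu\in\mathbb R$ such that $[f_1,f_2]=\mu f_2+v_0$, the endomorphism $\operatorname{ad}_{f_1}|_{\mathfrak a}$ of $\mathfrak a$ commutes with $J|_{\mathfrak a}$, and $\operatorname{ad}_{f_2}|_{\mathfrak a}=0$.
   Context: A complex structure on a real Lie algebra $\mathfrak g$ is an endomorphism $J$ with $J^2=-\mathrm{Id}$ and vanishing Nijenhuis tensor $N_J(x,y)=[Jx,Jy]-[x,y]-J([Jx,y]+[x,Jy])$ for all $x,y\in\mathfrak g$. A Hermitian structure $(J,\langle\cdot,\cdot\rangle)$ consists of a complex structure $J$ and an inner product with $\langle Jx,Jy\rangle=\langle x,y\rangle$. *)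

theory Defs
  imports "HOL-Analysis.Analysis"
begin

definition lie_algebra :: "('a::euclidean_space \<Rightarrow> 'a \<Rightarrow> 'a) \<Rightarrow> bool" where
  "lie_algebra br \<longleftrightarrow> bilinear br
     \<and> (\<forall>x y. br x y = - br y x)
     \<and> (\<forall>x y z. br x (br y z) + br y (br z x) + br z (br x y) = 0)"

definition lie_ideal :: "('a::euclidean_space \<Rightarrow> 'a \<Rightarrow> 'a) \<Rightarrow> 'a set \<Rightarrow> bool" where
  "lie_ideal br I \<longleftrightarrow> subspace I \<and> (\<forall>x y. y \<in> I \<longrightarrow> br x y \<in> I)"

definition abelian_subset :: "('a::euclidean_space \<Rightarrow> 'a \<Rightarrow> 'a) \<Rightarrow> 'a set \<Rightarrow> bool" where
  "abelian_subset br I \<longleftrightarrow> (\<forall>x\<in>I. \<forall>y\<in>I. br x y = 0)"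

definition almost_abelian :: "('a::euclidean_space \<Rightarrow> 'a \<Rightarrow> 'a) \<Rightarrow> bool" where
  "almost_abelian br \<longleftrightarrow>
     (\<exists>I. lie_ideal br I \<and> abelian_subset br I \<and> dim I + 1 = DIM('a))"

definition nijenhuis :: "('a::euclidean_space \<Rightarrow> 'a \<Rightarrow> 'a) \<Rightarrow> ('a \<Rightarrow> 'a) \<Rightarrow> 'a \<Rightarrow> 'a \<Rightarrow> 'a" where
  "nijenhuis br J x y = br (J x) (J y) - br x y - J (br (J x) y + br x (J y))"

definition complex_structure :: "('a::euclidean_space \<Rightarrow> 'a \<Rightarrow> 'a) \<Rightarrow> ('a \<Rightarrow> 'a) \<Rightarrow> bool" where
  "complex_structure br J \<longleftrightarrow> linear J \<and> (\<forall>x. J (J x) = - x)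
     \<and> (\<forall>x y. nijenhuis br J x y = 0)"

definition hermitian_structure :: "('a::euclidean_space \<Rightarrow> 'a \<Rightarrow> 'a) \<Rightarrow> ('a \<Rightarrow> 'a) \<Rightarrow> bool" where
  "hermitian_structure br J \<longleftrightarrow> complex_structure br J \<and> (\<forall>x y. J x \<bullet> J y = x \<bullet> y)"

end

theory Submission
  imports Defs
begin

lemma orth_span_set:
  fixes S :: "'a::euclidean_space set"
  shows "{y. \<forall>x\<in>span S. orthogonal x y} = {y. \<forall>x\<in>S. orthogonal x y}"
proof
  show "{y. \<forall>x\<in>span S. orthogonal x y} \<subseteq> {y. \<forall>x\<in>S. orthogonal x y}"
    using span_base by blast
  show "{y. \<forall>x\<in>S. orthogonal x y} \<subseteq> {y. \<forall>x\<in>span S. orthogonal x y}"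
    using orthogonal_to_span orthogonal_commute by blast
qed

theorem lemma3p1:
  fixes br :: "'a::euclidean_space \<Rightarrow> 'a \<Rightarrow> 'a" and J :: "'a \<Rightarrow> 'a"
  assumes "lie_algebra br" and "almost_abelian br" and "hermitian_structure br J"
  shows "\<exists>A f1 f2 v0 (\<mu>::real).
           lie_ideal br A \<and> abelian_subset br A \<and> J ` A \<subseteq> A \<and> dim A + 2 = DIM('a)
         \<and> f1 \<in> orthogonal_comp A \<and> f2 \<in> orthogonal_comp A
         \<and> norm f1 = 1 \<and> norm f2 = 1 \<and> f1 \<bullet> f2 = 0
         \<and> span {f1, f2} = orthogonal_comp A
         \<and> v0 \<in> A \<and> br f1 f2 = \<mu> *\<^sub>R f2 + v0
         \<and> (\<forall>x\<in>A. br f1 (J x) = J (br f1 x))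
         \<and> (\<forall>x\<in>A. br f2 x = 0)"
proof -
  have bil: "bilinear br" using assms(1) unfolding lie_algebra_def by blast
  have lin: "linear J" and JJ: "\<And>x. J (J x) = - x" and Jin: "\<And>x y. J x \<bullet> J y = x \<bullet> y"
    and nij: "\<And>x y. nijenhuis br J x y = 0"
    using assms(3) unfolding hermitian_structure_def complex_structure_def by auto
  have Jskew: "x \<bullet> J y = - (J x \<bullet> y)" for x y
  proof -
    have "J x \<bullet> J (J y) = x \<bullet> J y" by (rule Jin)
    then show ?thesis by (simp add: JJ)
  qed
  obtain I where Iid: "lie_ideal br I" and Iab: "abelian_subset br I" and dimI: "dim I + 1 = DIM('a)"
    using assms(2) unfolding almost_abelian_def by blast
  have subI: "subspace I" using Iid unfolding lie_ideal_def by blast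
  have Iideal: "\<And>x y. y \<in> I \<Longrightarrow> br x y \<in> I" using Iid unfolding lie_ideal_def by blast
  have Iab': "\<And>x y. x \<in> I \<Longrightarrow> y \<in> I \<Longrightarrow> br x y = 0" using Iab unfolding abelian_subset_def by blast
  obtain g where g0: "g \<noteq> 0" and gort: "\<And>y. y \<in> span I \<Longrightarrow> orthogonal g y"
  proof -
    have "dim I < DIM('a)" using dimI by simp
    then show ?thesis using that by (rule orthogonal_to_subspace_exists)
  qed
  define f1 where "f1 = g /\<^sub>R norm g"
  have nf1: "norm f1 = 1" using g0 by (simp add: f1_def)
  have f1f1: "f1 \<bullet> f1 = 1" using nf1 by (metis norm_eq_sqrt_inner real_sqrt_eq_1_iff)
  have f1I: "f1 \<bullet> y = 0" if "y \<in> I" for y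
    using gort[of y] that span_base[of y I] unfolding f1_def orthogonal_def by simp
  define H1 where "H1 = {y. f1 \<bullet> y = 0}"
  have f10: "f1 \<noteq> 0" using nf1 by auto
  have indep1: "independent {f1}"
    by (rule pairwise_orthogonal_independent) (use f10 in auto)
  have "dim {y \<in> UNIV. \<forall>x \<in> span {f1}. orthogonal x y} + dim (span {f1}) = dim (UNIV::'a set)"
    by (rule dim_subspace_orthogonal_to_vectors) auto
  moreover have "{y \<in> UNIV. \<forall>x \<in> span {f1}. orthogonal x y} = H1"
    using orth_span_set[of "{f1}"] by (simp add: H1_def orthogonal_def)
  moreover have "dim (span {f1}) = 1"
    using dim_eq_card_independent[OF indep1] by simp
  ultimately have dimH1: "dim H1 + 1 = DIM('a)" by simp
  have IH1: "I = H1"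
    by (rule subspace_dim_equal) (use subI dimH1 dimI f1I in \<open>auto simp: H1_def subspace_hyperplane\<close>)
  have memI: "y \<in> I \<longleftrightarrow> f1 \<bullet> y = 0" for y using IH1 H1_def by auto
  define f2 where "f2 = J f1"
  have f1f2: "f1 \<bullet> f2 = 0" using Jskew[of f1 f1] by (simp add: f2_def inner_commute)
  have f2f2: "f2 \<bullet> f2 = 1" using Jin[of f1 f1] f1f1 by (simp add: f2_def)
  have nf2: "norm f2 = 1" using f2f2 by (simp add: norm_eq_sqrt_inner)
  have f2I: "f2 \<in> I" using memI f1f2 by simp
  define A where "A = {y. f1 \<bullet> y = 0 \<and> f2 \<bullet> y = 0}"
  have AI: "A \<subseteq> I" using memI A_def by auto
  have subA: "subspace A" unfolding subspace_def A_def by (auto simp: inner_add_right)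
  have f12: "f1 \<noteq> f2" using f1f2 f1f1 by auto
  have f20: "f2 \<noteq> 0" using nf2 by auto
  have indep2: "independent {f1, f2}"
    by (rule pairwise_orthogonal_independent)
       (use f10 f20 f1f2 in \<open>auto simp: pairwise_def orthogonal_def inner_commute\<close>)
  have "dim {y \<in> UNIV. \<forall>x \<in> span {f1, f2}. orthogonal x y} + dim (span {f1, f2}) = dim (UNIV::'a set)"
    by (rule dim_subspace_orthogonal_to_vectors) auto
  moreover have "{y \<in> UNIV. \<forall>x \<in> span {f1, f2}. orthogonal x y} = A"
    using orth_span_set[of "{f1, f2}"] by (simp add: A_def orthogonal_def)
  moreover have "dim (span {f1, f2}) = 2"
    using dim_eq_card_independent[OF indep2] f12 by simp
  ultimately have dimA: "dim A + 2 = DIM('a)" by simp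
  define pr where "pr x = x - (f1 \<bullet> x) *\<^sub>R f1 - (f2 \<bullet> x) *\<^sub>R f2" for x
  have prA: "pr x \<in> A" for x
    unfolding A_def pr_def using f1f1 f2f2 f1f2
    by (auto simp: inner_diff_right inner_commute)
  have decomp: "x = pr x + (f1 \<bullet> x) *\<^sub>R f1 + (f2 \<bullet> x) *\<^sub>R f2" for x
    unfolding pr_def by simp
  have JA: "J ` A \<subseteq> A"
  proof
    fix z assume "z \<in> J ` A"
    then obtain x where x: "x \<in> A" "z = J x" by blast
    have "f1 \<bullet> J x = 0" using Jskew[of f1 x] x(1) by (simp add: A_def f2_def)
    moreover have "f2 \<bullet> J x = 0" using Jin[of f1 x] x(1) by (simp add: A_def f2_def)
    ultimately show "z \<in> A" using x by (simp add: A_def)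
  qed
  have Jf2: "J f2 = - f1" by (simp add: f2_def JJ)
  have comm: "br f1 (J x) = J (br f1 x)" if x: "x \<in> A" for x
  proof -
    have JxA: "J x \<in> A" using JA x by blast
    have "nijenhuis br J f2 x = 0" by (rule nij)
    moreover have "br f2 x = 0" using Iab' f2I x AI by blast
    moreover have "br f2 (J x) = 0" using Iab' f2I JxA AI by blast
    ultimately have "- br f1 (J x) - J (- br f1 x) = 0"
      unfolding nijenhuis_def Jf2 by (simp add: bilinear_lneg[OF bil])
    then show ?thesis using linear_neg[OF lin] by (simp add: algebra_simps)
  qed
  have f1A: "br f1 x \<in> A" if x: "x \<in> A" for x
  proof -
    have JxA: "J x \<in> A" using JA x by blast
    have "br f1 x \<in> I" using Iideal x AI by blast
    then have a: "f1 \<bullet> br f1 x = 0" using memI by blast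
    have "br f1 (J x) \<in> I" using Iideal JxA AI by blast
    then have "f1 \<bullet> J (br f1 x) = 0" using memI comm[OF x] by simp
    then have "f2 \<bullet> br f1 x = 0" using Jskew[of f1 "br f1 x"] by (simp add: f2_def)
    then show ?thesis using a by (simp add: A_def)
  qed
  have ideal: "lie_ideal br A"
    unfolding lie_ideal_def
  proof (intro conjI allI impI)
    show "subspace A" by (rule subA)
    fix x y assume y: "y \<in> A"
    have "br x y = br (pr x) y + (f1 \<bullet> x) *\<^sub>R br f1 y + (f2 \<bullet> x) *\<^sub>R br f2 y"
      by (subst decomp[of x]) (simp add: bilinear_ladd[OF bil] bilinear_lmul[OF bil])
    moreover have "br (pr x) y = 0" using Iab' prA y AI by blast
    moreover have "br f2 y = 0" using Iab' f2I y AI by blast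
    ultimately have "br x y = (f1 \<bullet> x) *\<^sub>R br f1 y" by simp
    then show "br x y \<in> A" using f1A[OF y] subA by (simp add: subspace_scale)
  qed
  have ab: "abelian_subset br A" using Iab AI unfolding abelian_subset_def by blast
  have f1c: "f1 \<in> orthogonal_comp A" and f2c: "f2 \<in> orthogonal_comp A"
    by (auto simp: orthogonal_comp_def orthogonal_def A_def inner_commute)
  have spaneq: "span {f1, f2} = orthogonal_comp A"
  proof
    show "span {f1, f2} \<subseteq> orthogonal_comp A"
      by (rule span_minimal) (use f1c f2c subspace_orthogonal_comp in auto)
    show "orthogonal_comp A \<subseteq> span {f1, f2}"
    proof
      fix y assume y: "y \<in> orthogonal_comp A"
      have pA: "pr y \<in> A" by (rule prA)
      then have "pr y \<bullet> y = 0" using y by (auto simp: orthogonal_comp_def orthogonal_def)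
      moreover have "pr y \<bullet> f1 = 0" "pr y \<bullet> f2 = 0" using pA by (auto simp: A_def inner_commute)
      ultimately have "pr y \<bullet> pr y = 0"
        by (simp add: pr_def inner_diff_right)
      then have "pr y = 0" by simp
      then have "y = (f1 \<bullet> y) *\<^sub>R f1 + (f2 \<bullet> y) *\<^sub>R f2" using decomp[of y] by simp
      also have "\<dots> \<in> span {f1, f2}"
        by (intro span_add span_mul span_base) auto
      finally show "y \<in> span {f1, f2}" .
    qed
  qed
  define \<mu> where "\<mu> = f2 \<bullet> br f1 f2"
  define v0 where "v0 = br f1 f2 - \<mu> *\<^sub>R f2"
  have "br f1 f2 \<in> I" using Iideal f2I by blast
  then have "f1 \<bullet> br f1 f2 = 0" using memI by blast
  then have v0A: "v0 \<in> A" using f1f2 f2f2 by (simp add: A_def v0_def \<mu>_def inner_diff_right)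
  have brf: "br f1 f2 = \<mu> *\<^sub>R f2 + v0" by (simp add: v0_def)
  have f2z: "\<forall>x\<in>A. br f2 x = 0" using Iab' f2I AI by blast
  show ?thesis
    using ideal ab JA dimA f1c f2c nf1 nf2 f1f2 spaneq v0A brf comm f2z by blast
qed

end
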